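(* Let $G$ be a biconnected series-parallel graph without transitive edges, and let $G'$ be a component of $G$ with respect to some separation pair $(s,t)$. Then $G'$ is critical if and only if $G'$ is heavy.
   Context: A biconnected graph is series-parallel if it contains no subdivision of $K_4$. For a biconnected graph $G$, a separation pair is a pair $(s,t)$ of vertices such that $G-s-t$ is disconnected. A transitive edge is an edge joining the two vertices of some separation pair. A component of $G$ with respect to $(s,t)$ is the subgraph induced by $s$, $t$ and the vertex set of one connected component of $G-s-t$; $s,t$ are its poles and its other vertices are internal vertices. A component $G'$ w.r.t. $(s,t)$ is heavy if it has an internal vertex adjacent to neither $s$ nor $t$; otherwise it is light. A component $G'$ is critical if there exist an internal vertex $v$ of $G'$ adjacent to neither $s$ nor $t$, and a simple $s$–$t$ path in $G'$ passing through $v$, written $s - p_s - v - p_t - t$, such that no vertex of the subpath $p_s$ strictly between $s$ and $v$ is adjacent to $t$, and no vertex of the subpath $p_t$ strictly between $v$ and $t$ is adjacent to $s$. *)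

theory Defs
  imports Main
begin

definition graph :: "'a set \<Rightarrow> ('a \<Rightarrow> 'a \<Rightarrow> bool) \<Rightarrow> bool" where
  "graph V E \<longleftrightarrow> finite V \<and> (\<forall>x y. E x y \<longrightarrow> E y x) \<and> (\<forall>x. \<not> E x x)
     \<and> (\<forall>x y. E x y \<longrightarrow> x \<in> V \<and> y \<in> V)"

definition path_in :: "('a \<Rightarrow> 'a \<Rightarrow> bool) \<Rightarrow> 'a set \<Rightarrow> 'a list \<Rightarrow> bool" where
  "path_in E S xs \<longleftrightarrow> xs \<noteq> [] \<and> set xs \<subseteq> S \<and> distinct xs
     \<and> (\<forall>i. Suc i < length xs \<longrightarrow> E (xs ! i) (xs ! Suc i))"

definition reach :: "('a \<Rightarrow> 'a \<Rightarrow> bool) \<Rightarrow> 'a set \<Rightarrow> 'a \<Rightarrow> 'a \<Rightarrow> bool" where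
  "reach E S x y \<longleftrightarrow> (\<exists>xs. path_in E S xs \<and> hd xs = x \<and> last xs = y)"

definition connected_graph :: "'a set \<Rightarrow> ('a \<Rightarrow> 'a \<Rightarrow> bool) \<Rightarrow> bool" where
  "connected_graph V E \<longleftrightarrow> V \<noteq> {} \<and> (\<forall>x\<in>V. \<forall>y\<in>V. reach E V x y)"

definition biconnected :: "'a set \<Rightarrow> ('a \<Rightarrow> 'a \<Rightarrow> bool) \<Rightarrow> bool" where
  "biconnected V E \<longleftrightarrow> graph V E \<and> card V \<ge> 3 \<and> connected_graph V E
     \<and> (\<forall>v\<in>V. connected_graph (V - {v}) E)"

definition has_K4_subdivision :: "'a set \<Rightarrow> ('a \<Rightarrow> 'a \<Rightarrow> bool) \<Rightarrow> bool" where
  "has_K4_subdivision V E \<longleftrightarrow> (\<exists>(b :: nat \<Rightarrow> 'a) (P :: nat \<Rightarrow> nat \<Rightarrow> 'a list).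
     inj_on b {..<4} \<and> b ` {..<4} \<subseteq> V \<and>
     (\<forall>i j. i < j \<and> j < 4 \<longrightarrow>
        path_in E V (P i j) \<and> hd (P i j) = b i \<and> last (P i j) = b j
        \<and> set (butlast (tl (P i j))) \<inter> b ` {..<4} = {}) \<and>
     (\<forall>i j k l. i < j \<and> j < 4 \<and> k < l \<and> l < 4 \<and> (i, j) \<noteq> (k, l) \<longrightarrow>
        set (P i j) \<inter> set (P k l) \<subseteq> b ` {..<4}))"

definition series_parallel :: "'a set \<Rightarrow> ('a \<Rightarrow> 'a \<Rightarrow> bool) \<Rightarrow> bool" where
  "series_parallel V E \<longleftrightarrow> biconnected V E \<and> \<not> has_K4_subdivision V E"

definition sep_pair :: "'a set \<Rightarrow> ('a \<Rightarrow> 'a \<Rightarrow> bool) \<Rightarrow> 'a \<Rightarrow> 'a \<Rightarrow> bool" where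
  "sep_pair V E s t \<longleftrightarrow> s \<in> V \<and> t \<in> V \<and> s \<noteq> t \<and> \<not> connected_graph (V - {s, t}) E"

definition no_transitive_edges :: "'a set \<Rightarrow> ('a \<Rightarrow> 'a \<Rightarrow> bool) \<Rightarrow> bool" where
  "no_transitive_edges V E \<longleftrightarrow> (\<forall>s t. sep_pair V E s t \<longrightarrow> \<not> E s t)"

definition conn_comp :: "('a \<Rightarrow> 'a \<Rightarrow> bool) \<Rightarrow> 'a set \<Rightarrow> 'a set \<Rightarrow> bool" where
  "conn_comp E S C \<longleftrightarrow> (\<exists>x\<in>S. C = {y. reach E S x y})"

text \<open>A component G' w.r.t. (s,t) is the subgraph induced by s, t and C, where C is the vertex set
  of a connected component of G - s - t; C is its set of internal vertices.\<close>
definition component :: "'a set \<Rightarrow> ('a \<Rightarrow> 'a \<Rightarrow> bool) \<Rightarrow> 'a \<Rightarrow> 'a \<Rightarrow> 'a set \<Rightarrow> bool" where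
  "component V E s t C \<longleftrightarrow> sep_pair V E s t \<and> conn_comp E (V - {s, t}) C"

definition heavy :: "('a \<Rightarrow> 'a \<Rightarrow> bool) \<Rightarrow> 'a \<Rightarrow> 'a \<Rightarrow> 'a set \<Rightarrow> bool" where
  "heavy E s t C \<longleftrightarrow> (\<exists>v\<in>C. \<not> E v s \<and> \<not> E v t)"

definition critical :: "('a \<Rightarrow> 'a \<Rightarrow> bool) \<Rightarrow> 'a \<Rightarrow> 'a \<Rightarrow> 'a set \<Rightarrow> bool" where
  "critical E s t C \<longleftrightarrow> (\<exists>v\<in>C. \<not> E v s \<and> \<not> E v t \<and>
     (\<exists>ps pt. path_in E (C \<union> {s, t}) (s # ps @ v # pt @ [t])
        \<and> (\<forall>u\<in>set ps. \<not> E u t) \<and> (\<forall>u\<in>set pt. \<not> E u s)))"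

end

theory Submission imports Defs begin

lemma succ_nth: "successively P xs \<longleftrightarrow> (\<forall>i. Suc i < length xs \<longrightarrow> P (xs!i) (xs!Suc i))"
proof (induction P xs rule: successively.induct)
  case (3 P x y xs)
  show ?case
  proof
    assume h: "successively P (x # y # xs)"
    show "\<forall>i. Suc i < length (x # y # xs) \<longrightarrow> P ((x # y # xs) ! i) ((x # y # xs) ! Suc i)"
    proof (intro allI impI)
      fix i assume "Suc i < length (x # y # xs)"
      then show "P ((x # y # xs) ! i) ((x # y # xs) ! Suc i)"
        using h 3 by (cases i) auto
    qed
  next
    assume h: "\<forall>i. Suc i < length (x # y # xs) \<longrightarrow> P ((x # y # xs) ! i) ((x # y # xs) ! Suc i)"
    have "P x y" using h[rule_format, of 0] by simp
    moreover have "\<forall>i. Suc i < length (y # xs) \<longrightarrow> P ((y # xs) ! i) ((y # xs) ! Suc i)"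
      using h by (metis Suc_less_eq length_Cons nth_Cons_Suc)
    ultimately show "successively P (x # y # xs)" using 3 by simp
  qed
qed auto

lemma path_in_alt: "path_in E S xs \<longleftrightarrow> xs \<noteq> [] \<and> set xs \<subseteq> S \<and> distinct xs \<and> successively E xs"
  unfolding path_in_def succ_nth by blast

definition adjS :: "('a \<Rightarrow> 'a \<Rightarrow> bool) \<Rightarrow> 'a set \<Rightarrow> 'a \<Rightarrow> 'a \<Rightarrow> bool" where
  "adjS E S a b \<longleftrightarrow> E a b \<and> a \<in> S \<and> b \<in> S"

lemma path_Cons2: "path_in E S (a # b # xs) \<longleftrightarrow> a \<in> S \<and> a \<notin> set (b # xs) \<and> E a b \<and> path_in E S (b # xs)"
  unfolding path_in_alt by auto

lemma path_single[simp]: "path_in E S [a] \<longleftrightarrow> a \<in> S"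
  unfolding path_in_alt by auto

lemma path_append: "path_in E S (xs @ ys) \<longleftrightarrow>
   (xs = [] \<longrightarrow> path_in E S ys) \<and> (ys = [] \<longrightarrow> path_in E S xs) \<and>
   (xs \<noteq> [] \<longrightarrow> ys \<noteq> [] \<longrightarrow> path_in E S xs \<and> path_in E S ys \<and> E (last xs) (hd ys) \<and> set xs \<inter> set ys = {})"
  unfolding path_in_alt successively_append_iff by auto

lemma path_rev: "(\<And>x y. E x y \<Longrightarrow> E y x) \<Longrightarrow> path_in E S (rev xs) \<longleftrightarrow> path_in E S xs"
  unfolding path_in_alt by (auto intro: successively_mono)

lemma path_mono: "path_in E S xs \<Longrightarrow> S \<subseteq> S' \<Longrightarrow> path_in E S' xs"
  unfolding path_in_alt by auto

lemma path_subset: "path_in E S xs \<Longrightarrow> set xs \<subseteq> S' \<Longrightarrow> path_in E S' xs"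
  unfolding path_in_alt by auto

lemma path_to_rtr: "path_in E S xs \<Longrightarrow> (adjS E S)\<^sup>*\<^sup>* (hd xs) (last xs)"
proof (induction xs)
  case (Cons a xs)
  show ?case
  proof (cases xs)
    case Nil then show ?thesis by simp
  next
    case (Cons b ys)
    then have "path_in E S xs" "adjS E S a b" using Cons.prems path_Cons2 unfolding adjS_def path_in_alt by auto
    then show ?thesis using Cons.IH Cons by (auto intro: converse_rtranclp_into_rtranclp)
  qed
qed (simp add: path_in_alt)

lemma rtr_to_path: "(adjS E S)\<^sup>*\<^sup>* x y \<Longrightarrow> y \<in> S \<Longrightarrow> \<exists>p. path_in E S p \<and> hd p = x \<and> last p = y"
proof (induction rule: converse_rtranclp_induct)
  case base
  then show ?case by (intro exI[of _ "[y]"]) simp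
next
  case (step a b)
  then obtain p where p: "path_in E S p" "hd p = b" "last p = y" by auto
  show ?case
  proof (cases "a \<in> set p")
    case True
    then obtain u w where uw: "p = u @ a # w" by (meson split_list)
    have "path_in E S (a # w)" using p(1) uw path_append by (metis list.distinct(1))
    moreover have "last (a # w) = y" using p(3) uw by simp
    ultimately show ?thesis by (intro exI[of _ "a # w"]) simp
  next
    case False
    have "p \<noteq> []" using p unfolding path_in_alt by auto
    then obtain c q where pq: "p = c # q" by (cases p) auto
    have "path_in E S (a # p)" using p False step(1) pq unfolding adjS_def
      by (simp add: path_Cons2)
    then show ?thesis using p pq by (intro exI[of _ "a # p"]) simp
  qed
qed

lemma reach_rtr: "reach E S x y \<longleftrightarrow> x \<in> S \<and> y \<in> S \<and> (adjS E S)\<^sup>*\<^sup>* x y"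
proof
  assume "reach E S x y"
  then obtain p where p: "path_in E S p" "hd p = x" "last p = y" unfolding reach_def by auto
  then have "p \<noteq> []" "set p \<subseteq> S" unfolding path_in_alt by auto
  then show "x \<in> S \<and> y \<in> S \<and> (adjS E S)\<^sup>*\<^sup>* x y" using p path_to_rtr by fastforce
next
  assume "x \<in> S \<and> y \<in> S \<and> (adjS E S)\<^sup>*\<^sup>* x y"
  then show "reach E S x y" unfolding reach_def using rtr_to_path by metis
qed

lemma reach_trans: "reach E S x y \<Longrightarrow> reach E S y z \<Longrightarrow> reach E S x z"
  unfolding reach_rtr by auto

lemma reach_refl: "x \<in> S \<Longrightarrow> reach E S x x"
  unfolding reach_rtr by auto

lemma reach_step: "reach E S x y \<Longrightarrow> E y z \<Longrightarrow> z \<in> S \<Longrightarrow> reach E S x z"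
  unfolding reach_rtr adjS_def by (auto intro: rtranclp.rtrancl_into_rtrancl)

lemma reach_sym: "(\<And>x y. E x y \<Longrightarrow> E y x) \<Longrightarrow> reach E S x y \<Longrightarrow> reach E S y x"
  unfolding reach_def by (metis path_rev hd_rev last_rev)

lemma reach_mono: "reach E S x y \<Longrightarrow> S \<subseteq> S' \<Longrightarrow> reach E S' x y"
  unfolding reach_def using path_mono by metis

lemma reach_in: "reach E S x y \<Longrightarrow> x \<in> S \<and> y \<in> S"
  unfolding reach_rtr by auto

lemma path_reach: "path_in E S p \<Longrightarrow> u \<in> set p \<Longrightarrow> reach E S (hd p) u"
proof -
  assume p: "path_in E S p" "u \<in> set p"
  then obtain a b where ab: "p = a @ u # b" by (meson split_list)
  then have "path_in E S (a @ [u])" using p(1) path_append[of E S "a @ [u]" b] by auto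
  then have "reach E S (hd (a @ [u])) u" unfolding reach_def by force
  then show ?thesis using ab by (cases a) auto
qed


lemma butlast_reach: "path_in E S p \<Longrightarrow> u \<in> set (butlast p) \<Longrightarrow> reach E (S - {last p}) (hd p) u"
proof -
  assume p: "path_in E S p" "u \<in> set (butlast p)"
  then have ne: "p \<noteq> []" unfolding path_in_alt by auto
  then have eq: "p = butlast p @ [last p]" by simp
  have bne: "butlast p \<noteq> []" using p(2) by auto
  have "path_in E S (butlast p)" using p(1) eq path_append[of E S "butlast p" "[last p]"] bne by metis
  moreover have "last p \<notin> set (butlast p)" using p(1) eq unfolding path_in_alt
    by (metis distinct_append disjoint_iff list.set_intros(1))
  ultimately have "path_in E (S - {last p}) (butlast p)" unfolding path_in_alt by auto
  then have "reach E (S - {last p}) (hd (butlast p)) u" using path_reach p(2) by metis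
  moreover have "hd (butlast p) = hd p" using bne eq by (metis hd_append2)
  ultimately show ?thesis by simp
qed

definition Cp :: "('a \<Rightarrow> 'a \<Rightarrow> bool) \<Rightarrow> 'a \<Rightarrow> 'a \<Rightarrow> 'a set \<Rightarrow> 'a set" where
  "Cp E s t C = {u \<in> C. \<not> E u s \<and> \<not> E u t}"
definition DD :: "('a \<Rightarrow> 'a \<Rightarrow> bool) \<Rightarrow> 'a \<Rightarrow> 'a \<Rightarrow> 'a set \<Rightarrow> 'a \<Rightarrow> 'a set" where
  "DD E s t C w = {u. reach E (Cp E s t C) w u}"
definition NN :: "('a \<Rightarrow> 'a \<Rightarrow> bool) \<Rightarrow> 'a set \<Rightarrow> 'a set" where
  "NN E D = {x. x \<notin> D \<and> (\<exists>d\<in>D. E d x)}"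
lemma Cp_swap: "Cp E t s C = Cp E s t C" unfolding Cp_def by blast
lemma DD_swap: "DD E t s C w = DD E s t C w" unfolding DD_def by (simp only: Cp_swap)

lemma set_bl: "xs \<noteq> [] \<Longrightarrow> set xs = insert (last xs) (set (butlast xs))"
  by (induction xs) auto

lemma pairs4: "i < j \<Longrightarrow> j < (4::nat) \<Longrightarrow> (i=0\<and>j=1) \<or> (i=0\<and>j=2) \<or> (i=0\<and>j=3) \<or> (i=1\<and>j=2) \<or> (i=1\<and>j=3) \<or> (i=2\<and>j=3)"
  by arith

lemma K4I:
  fixes b :: "nat \<Rightarrow> 'a" and P :: "nat \<Rightarrow> nat \<Rightarrow> 'a list" and K :: "nat \<Rightarrow> nat \<Rightarrow> 'a set"
  assumes "inj_on b {..<4}" "b ` {..<4} \<subseteq> V"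
    "\<And>i j. i<j \<Longrightarrow> j<4 \<Longrightarrow> path_in E V (P i j) \<and> hd (P i j) = b i \<and> last (P i j) = b j \<and> set (butlast (tl (P i j))) \<inter> b ` {..<4} = {}"
    "\<And>i j. i<j \<Longrightarrow> j<4 \<Longrightarrow> set (P i j) \<subseteq> K i j \<union> b ` {..<4}"
    "\<And>i j k l. i<j \<Longrightarrow> j<4 \<Longrightarrow> k<l \<Longrightarrow> l<4 \<Longrightarrow> (i,j)\<noteq>(k,l) \<Longrightarrow> K i j \<inter> K k l = {}"
  shows "has_K4_subdivision V E"
  unfolding has_K4_subdivision_def
proof (intro exI conjI allI impI)
  show "inj_on b {..<4}" "b ` {..<4} \<subseteq> V" by fact+
next
  fix i j :: nat assume h: "i < j \<and> j < 4"
  then show "path_in E V (P i j)" "hd (P i j) = b i" "last (P i j) = b j" "set (butlast (tl (P i j))) \<inter> b ` {..<4} = {}"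
    using assms(3) by blast+
next
  fix i j k l :: nat assume h: "i < j \<and> j < 4 \<and> k < l \<and> l < 4 \<and> (i, j) \<noteq> (k, l)"
  then have "K i j \<inter> K k l = {}" using assms(5) by blast
  moreover have "set (P i j) \<subseteq> K i j \<union> b ` {..<4}" "set (P k l) \<subseteq> K k l \<union> b ` {..<4}" using h assms(4) by blast+
  ultimately show "set (P i j) \<inter> set (P k l) \<subseteq> b ` {..<4}" by blast
qed

locale SPC =
  fixes V :: "'a set" and E :: "'a \<Rightarrow> 'a \<Rightarrow> bool" and s t :: 'a and C :: "'a set"
  assumes bic: "biconnected V E" and ntr: "no_transitive_edges V E" and comp: "component V E s t C"
begin

lemma symE: "E x y \<Longrightarrow> E y x" using bic unfolding biconnected_def graph_def by blast
lemma irr: "\<not> E x x" using bic unfolding biconnected_def graph_def by blast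
lemma EV: "E x y \<Longrightarrow> x \<in> V \<and> y \<in> V" using bic unfolding biconnected_def graph_def by blast
lemma sep: "sep_pair V E s t" using comp unfolding component_def by blast
lemma sV: "s \<in> V" and tV: "t \<in> V" and st: "s \<noteq> t" using sep unfolding sep_pair_def by auto
lemma nst: "\<not> E s t" using ntr sep unfolding no_transitive_edges_def by blast

lemma x0: obtains x0 where "x0 \<in> V - {s,t}" "C = {y. reach E (V - {s,t}) x0 y}"
  using comp unfolding component_def conn_comp_def by blast

lemma C_sub: "C \<subseteq> V - {s,t}"
  using x0 reach_in by (metis (no_types, lifting) mem_Collect_eq subsetI)

lemma sC: "s \<notin> C" and tC: "t \<notin> C" using C_sub by auto

lemma C_reach: "u \<in> C \<Longrightarrow> reach E (V - {s,t}) u u' \<Longrightarrow> u' \<in> C"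
  using x0 reach_trans by (metis (no_types, lifting) mem_Collect_eq)

lemma C_closed: "u \<in> C \<Longrightarrow> E u u' \<Longrightarrow> u' \<noteq> s \<Longrightarrow> u' \<noteq> t \<Longrightarrow> u' \<in> C"
proof -
  assume a: "u \<in> C" "E u u'" "u' \<noteq> s" "u' \<noteq> t"
  have "reach E (V - {s,t}) u u'"
    using reach_step[OF reach_refl, of u "V - {s,t}" E u'] a C_sub EV by blast
  then show ?thesis using C_reach a by blast
qed

lemma conn_minus: "v \<in> V \<Longrightarrow> connected_graph (V - {v}) E"
  using bic unfolding biconnected_def by blast

lemma conn_sy: "y \<in> V \<Longrightarrow> E s y \<Longrightarrow> connected_graph (V - {s,y}) E"
  using ntr sV irr unfolding no_transitive_edges_def sep_pair_def by blast

lemma stay: "path_in E (V - {s}) p \<Longrightarrow> hd p \<in> C \<Longrightarrow> last p = t \<Longrightarrow> set (butlast p) \<subseteq> C"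
proof
  fix u assume a: "path_in E (V - {s}) p" "hd p \<in> C" "last p = t" "u \<in> set (butlast p)"
  have "reach E (V - {s} - {t}) (hd p) u" using butlast_reach[OF a(1) a(4)] a(3) by simp
  moreover have "V - {s} - {t} = V - {s,t}" by auto
  ultimately show "u \<in> C" using C_reach a(2) by metis
qed

lemma St: obtains p where "path_in E (V - C) p" "hd p = s" "last p = t"
proof -
  obtain x0 where x0: "x0 \<in> V - {s,t}" "C = {y. reach E (V - {s,t}) x0 y}" using x0 by blast
  have "\<not> connected_graph (V - {s,t}) E" using sep unfolding sep_pair_def by blast
  then obtain a b where ab: "a \<in> V - {s,t}" "b \<in> V - {s,t}" "\<not> reach E (V - {s,t}) a b"
    using x0 unfolding connected_graph_def by blast
  obtain u where u: "u \<in> V - {s,t}" "u \<notin> C"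
  proof (cases "a \<in> C \<and> b \<in> C")
    case True
    then have "reach E (V - {s,t}) x0 a" "reach E (V - {s,t}) x0 b" using x0 by auto
    then have "reach E (V - {s,t}) a b" using reach_sym reach_trans symE by metis
    then show ?thesis using ab by blast
  next
    case False then show ?thesis using ab that by blast
  qed
  have gen: "reach E (V - C) u v" if v: "v \<in> {s,t}" "v' \<in> {s,t}" "v \<noteq> v'" for v v'
  proof -
    have "connected_graph (V - {v'}) E" using conn_minus v sV tV by blast
    then have "reach E (V - {v'}) u v" using u v st sV tV unfolding connected_graph_def by blast
    then obtain p where p: "path_in E (V - {v'}) p" "hd p = u" "last p = v" unfolding reach_def by blast
    have "set p \<subseteq> V - C"
    proof
      fix c assume c: "c \<in> set p"
      have "c \<in> V" using p c unfolding path_in_alt by auto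
      moreover have "c \<notin> C"
      proof
        assume cC: "c \<in> C"
        then have "c \<noteq> v" using sC tC v by auto
        then have "c \<in> set (butlast p)" using c p(3)
          by (metis append_butlast_last_id in_set_butlast_appendI list.set(1) empty_iff rotate1.simps(2) set_ConsD set_rotate1)
        then have "reach E (V - {v'} - {v}) u c" using butlast_reach p by metis
        moreover have "V - {v'} - {v} = V - {s,t}" using v by auto
        ultimately have "reach E (V - {s,t}) c u" using reach_sym symE by metis
        then show False using C_reach cC u by blast
      qed
      ultimately show "c \<in> V - C" by blast
    qed
    then have "path_in E (V - C) p" using p path_subset by metis
    then show ?thesis using p unfolding reach_def by blast
  qed
  have r1: "reach E (V - C) u s" using gen[of s t] st by blast
  have r2: "reach E (V - C) u t" using gen[of t s] st by blast
  have "reach E (V - C) s u" using reach_sym[OF symE r1] by blast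
  then have "reach E (V - C) s t" using reach_trans r2 by metis
  then obtain p where "path_in E (V - C) p" "hd p = s" "last p = t" unfolding reach_def by blast
  then show ?thesis using that by blast
qed


lemma D_sub: "DD E s t C w \<subseteq> Cp E s t C"
proof
  fix u assume "u \<in> DD E s t C w"
  then have "reach E (Cp E s t C) w u" unfolding DD_def by simp
  then show "u \<in> Cp E s t C" using reach_in by metis
qed

lemma w_D: "w \<in> Cp E s t C \<Longrightarrow> w \<in> DD E s t C w"
  unfolding DD_def using reach_refl[of w "Cp E s t C" E] by simp

lemma D_path: assumes "d1 \<in> DD E s t C w" "d2 \<in> DD E s t C w"
  shows "\<exists>p. path_in E (DD E s t C w) p \<and> hd p = d1 \<and> last p = d2"
proof -
  have r1: "reach E (Cp E s t C) w d1" and r2: "reach E (Cp E s t C) w d2" using assms unfolding DD_def by auto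
  have r: "reach E (Cp E s t C) d1 d2" using reach_trans[OF reach_sym[OF symE r1] r2] .
  then obtain p where p: "path_in E (Cp E s t C) p" "hd p = d1" "last p = d2" unfolding reach_def by blast
  have "set p \<subseteq> DD E s t C w"
  proof
    fix u assume "u \<in> set p"
    then have "reach E (Cp E s t C) d1 u" using path_reach p by metis
    moreover have "reach E (Cp E s t C) w d1" using assms(1) unfolding DD_def by simp
    ultimately have "reach E (Cp E s t C) w u" using reach_trans by metis
    then show "u \<in> DD E s t C w" unfolding DD_def by simp
  qed
  then show ?thesis using p path_subset by metis
qed

lemma N_C: assumes "x \<in> NN E (DD E s t C w)" shows "x \<in> C" "E x s \<or> E x t"
proof -
  obtain d where d: "d \<in> DD E s t C w" "E d x" "x \<notin> DD E s t C w" using assms unfolding NN_def by blast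
  then have dC: "d \<in> Cp E s t C" using D_sub by blast
  then have "x \<noteq> s" "x \<noteq> t" using d unfolding Cp_def by auto
  moreover have "d \<in> C" using dC unfolding Cp_def by blast
  ultimately show xC: "x \<in> C" using C_closed[of d x] d by blast
  show "E x s \<or> E x t"
  proof (rule ccontr)
    assume "\<not> (E x s \<or> E x t)"
    then have "x \<in> Cp E s t C" using xC unfolding Cp_def by blast
    moreover have "reach E (Cp E s t C) w d" using d unfolding DD_def by blast
    ultimately have "reach E (Cp E s t C) w x" using d(2) reach_step by metis
    then show False using d unfolding DD_def by blast
  qed
qed

lemma nbr: "d \<in> D \<Longrightarrow> E d x \<Longrightarrow> x \<in> D \<or> x \<in> NN E D"
  unfolding NN_def by blast

lemma bad:
  assumes wCp: "w \<in> Cp E s t C" and allA: "\<forall>x \<in> NN E (DD E s t C w). E x s"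
    and nK4: "\<not> has_K4_subdivision V E"
  shows False
proof -
  define D where "D = DD E s t C w"
  define N where "N = NN E D"
  have wD: "w \<in> D" unfolding D_def using w_D wCp by blast
  have DCp: "D \<subseteq> Cp E s t C" unfolding D_def using D_sub by blast
  then have DC: "D \<subseteq> C" unfolding Cp_def by blast
  have NC: "N \<subseteq> C" unfolding N_def D_def using N_C(1) by blast
  have DN: "D \<inter> N = {}" unfolding N_def NN_def by blast
  have NA: "\<And>u. u \<in> N \<Longrightarrow> E s u" using allA symE unfolding N_def D_def by blast
  have nbr': "\<And>d u. d \<in> D \<Longrightarrow> E d u \<Longrightarrow> u \<in> D \<or> u \<in> N" unfolding N_def NN_def by blast
  have wC: "w \<in> C" using wD DC by blast
  have wV: "w \<in> V" using wC C_sub by blast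
  have tDN: "t \<notin> D" "t \<notin> N" using tC DC NC by blast+
  have sDN: "s \<notin> D" "s \<notin> N" using sC DC NC by blast+
  have "connected_graph (V - {s}) E" using conn_minus sV by blast
  moreover have "w \<in> V - {s}" "t \<in> V - {s}" using wV wC sC tV st by auto
  ultimately have "reach E (V - {s}) w t" unfolding connected_graph_def by blast
  then obtain pw where pw: "path_in E (V - {s}) pw" "hd pw = w" "last pw = t" unfolding reach_def by blast
  have "pw \<noteq> []" using pw(1) unfolding path_in_alt by blast
  then have "w \<in> set pw" using pw(2) hd_in_set by metis
  then have "\<exists>u\<in>set pw. u \<in> D \<union> N" using wD by blast
  then obtain a1 b c1 where pwd: "pw = a1 @ b # c1" "b \<in> D \<union> N" "\<forall>u\<in>set c1. u \<notin> D \<union> N"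
    using split_list_last_prop[of pw "\<lambda>u. u \<in> D \<union> N"] by blast
  have c1ne: "c1 \<noteq> []"
  proof
    assume "c1 = []"
    then have "b = t" using pwd(1) pw(3) by simp
    then show False using pwd(2) tDN by blast
  qed
  have pQ: "path_in E (V - {s}) (b # c1)" using pw(1) pwd(1) path_append[of E "V - {s}" a1 "b # c1"] by auto
  then have Ebc: "E b (hd c1)" using c1ne path_Cons2[of E "V - {s}" b "hd c1" "tl c1"] by simp
  have bN: "b \<in> N"
  proof (rule ccontr)
    assume "b \<notin> N"
    then have "b \<in> D" using pwd(2) by blast
    then have "hd c1 \<in> D \<or> hd c1 \<in> N" using nbr' Ebc by blast
    moreover have "hd c1 \<in> set c1" using c1ne by simp
    ultimately show False using pwd(3) by blast
  qed
  define y where "y = b"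
  define Q where "Q = b # c1"
  have Qp: "path_in E (V - {s}) Q" "hd Q = y" "last Q = t" using pQ pw(3) pwd(1) c1ne unfolding Q_def y_def by auto
  have yN: "y \<in> N" using bN y_def by simp
  have QD: "\<forall>u\<in>set Q. u \<notin> D" using pwd(3) bN DN unfolding Q_def by auto
  have QN: "\<forall>u\<in>set Q. u \<in> N \<longrightarrow> u = y" using pwd(3) unfolding Q_def y_def by auto
  have QC: "set Q \<subseteq> C \<union> {t}"
  proof -
    have "hd Q \<in> C" using Qp(2) yN NC by blast
    then have "set (butlast Q) \<subseteq> C" using stay[OF Qp(1) _ Qp(3)] by blast
    moreover have "set Q = insert (last Q) (set (butlast Q))" unfolding Q_def by (rule set_bl) simp
    ultimately show ?thesis using Qp(3) by blast
  qed
  have QV: "set Q \<subseteq> V" using QC C_sub tV by blast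
  have yC: "y \<in> C" using yN NC by blast
  have yV: "y \<in> V" using yC C_sub by blast
  have Esy: "E s y" using NA yN by blast
  have "connected_graph (V - {s,y}) E" using conn_sy yV Esy by blast
  moreover have "w \<in> V - {s,y}" "t \<in> V - {s,y}" using wV wC sC tV st wD yN DN yC tC by auto
  ultimately have "reach E (V - {s,y}) w t" unfolding connected_graph_def by blast
  then obtain pr where pr: "path_in E (V - {s,y}) pr" "hd pr = w" "last pr = t" unfolding reach_def by blast
  have prne: "pr \<noteq> []" using pr(1) unfolding path_in_alt by blast
  have "t \<in> set pr" using pr(3) prne last_in_set by metis
  moreover have "t \<in> set Q" using Qp(3) unfolding Q_def by (metis last_in_set list.distinct(1))
  ultimately have "\<exists>u\<in>set pr. u \<in> set Q" by blast
  then obtain a2 z c2 where prd: "pr = a2 @ z # c2" "z \<in> set Q" "\<forall>u\<in>set a2. u \<notin> set Q"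
    using split_list_first_prop[of pr "\<lambda>u. u \<in> set Q"] by blast
  have a2ne: "a2 \<noteq> []"
  proof
    assume "a2 = []"
    then have "z = w" using prd(1) pr(2) by simp
    then show False using prd(2) QD wD by blast
  qed
  have wa2: "w \<in> set a2" using a2ne prd(1) pr(2) by (metis hd_append2 hd_in_set)
  then have "\<exists>u\<in>set a2. u \<in> D \<union> N" using wD by blast
  then obtain a3 x c3 where a2d: "a2 = a3 @ x # c3" "x \<in> D \<union> N" "\<forall>u\<in>set c3. u \<notin> D \<union> N"
    using split_list_last_prop[of a2 "\<lambda>u. u \<in> D \<union> N"] by blast
  have prV: "set pr \<subseteq> V - {s,y}" using pr(1) unfolding path_in_alt by blast
  have zy: "z \<noteq> y" using prV prd(1) by auto
  have zD: "z \<notin> D" using QD prd(2) by blast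
  have zN: "z \<notin> N" using QN prd(2) zy by blast
  define R where "R = x # c3 @ [z]"
  have prR: "pr = a3 @ R @ c2" unfolding R_def using prd(1) a2d(1) by simp
  have pR: "path_in E (V - {s,y}) R"
    using pr(1) prR path_append[of E "V - {s,y}" a3 "R @ c2"] path_append[of E "V - {s,y}" R c2]
    unfolding R_def by auto
  have ExR: "E x (hd (c3 @ [z]))" using pR path_Cons2[of E "V - {s,y}" x "hd (c3 @ [z])" "tl (c3 @ [z])"]
    unfolding R_def by simp
  have xN: "x \<in> N"
  proof (rule ccontr)
    assume "x \<notin> N"
    then have "x \<in> D" using a2d(2) by blast
    then have h: "hd (c3 @ [z]) \<in> D \<or> hd (c3 @ [z]) \<in> N" using nbr' ExR by blast
    show False
    proof (cases c3)
      case Nil then show ?thesis using h zD zN by simp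
    next
      case (Cons c cs) then show ?thesis using h a2d(3) by simp
    qed
  qed
  have xy: "x \<noteq> y" using prV prd(1) a2d(1) by auto
  have xa2: "x \<in> set a2" "set c3 \<subseteq> set a2" unfolding a2d(1) by auto
  have xQ: "x \<notin> set Q" using prd(3) xa2 by blast
  have c3Q: "\<forall>u\<in>set c3. u \<notin> set Q" using prd(3) xa2 by blast
  have c3C: "set c3 \<subseteq> C"
  proof -
    have "V - {s,y} \<subseteq> V - {s}" by blast
    then have "path_in E (V - {s}) pr" using path_mono[OF pr(1)] by blast
    moreover have "hd pr \<in> C" using pr(2) wC by simp
    ultimately have "set (butlast pr) \<subseteq> C" using stay pr(3) by blast
    moreover have "set a2 \<subseteq> set (butlast pr)" using prd(1) by (simp add: butlast_append)
    ultimately show ?thesis using a2d(1) by auto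
  qed
  have xC: "x \<in> C" using xN NC by blast
  have zC: "z \<in> C \<union> {t}" using QC prd(2) by blast
  obtain q1 q2 where Qd: "Q = q1 @ z # q2" using prd(2) by (meson split_list)
  have q1ne: "q1 \<noteq> []" using Qd Qp(2) zy by auto
  have hq1: "hd q1 = y" using Qd Qp(2) q1ne by simp
  have lq2: "last (z # q2) = t" using Qd Qp(3) by simp
  have distQ: "distinct Q" using Qp(1) unfolding path_in_alt by blast
  obtain d1 where d1: "d1 \<in> D" "E d1 x" using xN unfolding N_def NN_def by blast
  obtain d2 where d2: "d2 \<in> D" "E d2 y" using yN unfolding N_def NN_def by blast
  obtain Dp where Dp: "path_in E D Dp" "hd Dp = d1" "last Dp = d2" using D_path d1(1) d2(1) unfolding D_def by blast
  have DpD: "set Dp \<subseteq> D" using Dp(1) unfolding path_in_alt by blast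
  have Dpne: "Dp \<noteq> []" using Dp(1) unfolding path_in_alt by blast
  obtain St where St: "path_in E (V - C) St" "hd St = s" "last St = t" using St by blast
  define Sb where "Sb = butlast St"
  have Stne: "St \<noteq> []" using St(1) unfolding path_in_alt by blast
  have Stdec: "St = Sb @ [t]" using Stne St(3) unfolding Sb_def by (metis append_butlast_last_id)
  have Sbne: "Sb \<noteq> []" using Stdec St(2) st by (metis append_Nil list.sel(1))
  have pSb: "path_in E (V - C) Sb" "E (last Sb) t" "t \<notin> set Sb"
    using St(1) Stdec Sbne path_append[of E "V - C" Sb "[t]"] by auto
  have hSb: "hd Sb = s" using Stdec Sbne St(2) by (metis hd_append2)
  have SbC: "set Sb \<inter> C = {}" using pSb(1) unfolding path_in_alt by blast
  have SbV: "set Sb \<subseteq> V" using pSb(1) unfolding path_in_alt by blast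
  define P03 where "P03 = Sb @ rev (z # q2)"
  define P12 where "P12 = [x] @ Dp @ [y]"
  define P23 where "P23 = q1 @ [z]"
  define bb where "bb = (\<lambda>i::nat. [s, x, y, z] ! i)"
  define PP where "PP = (\<lambda>(i::nat) (j::nat). if i = 0 then (if j = 1 then [s,x] else if j = 2 then [s,y] else P03)
      else if i = 1 then (if j = 2 then P12 else R) else P23)"
  define K where "K = (\<lambda>(i::nat) (j::nat). if i = 0 then (if j = 3 then set Sb \<union> set q2 else {})
      else if i = 1 then (if j = 2 then set Dp else set c3) else set q1)"
  have four: "{..<4::nat} = {0,1,2,3}" by auto
  have Bs: "bb ` {..<4} = {s,x,y,z}" unfolding four bb_def by simp
  have sx: "s \<noteq> x" using sC xC by blast
  have sy: "s \<noteq> y" using sC yC by blast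
  have sz: "s \<noteq> z" using sC zC st by blast
  have xz: "x \<noteq> z" using xQ prd(2) by blast
  have inj: "inj_on bb {..<4}" unfolding four bb_def inj_on_def using sx sy sz xy xz zy by auto
  have xV: "x \<in> V" using xC C_sub by blast
  have zV: "z \<in> V" using zC C_sub tV by blast
  have BV: "bb ` {..<4} \<subseteq> V" unfolding Bs using sV xV yV zV by blast
  have distq: "distinct q1" "distinct q2" "set q1 \<inter> set q2 = {}" "z \<notin> set q1" "z \<notin> set q2"
    using distQ Qd by auto
  have yq2: "y \<notin> set q2" using distq hq1 q1ne by (metis disjoint_iff hd_in_set)
  have q12Q: "set q1 \<subseteq> set Q" "set q2 \<subseteq> set Q" using Qd by auto
  have xq: "x \<notin> set q1" "x \<notin> set q2" using xQ q12Q by blast+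
  have sq: "s \<notin> set q1" "s \<notin> set q2" using q12Q QC sC st by blast+
  have tSb: "\<forall>u \<in> set Q. u \<notin> set Sb" using QC SbC pSb(3) by blast
  have pathQ1: "path_in E (V - {s}) (z # q2)" "path_in E (V - {s}) (q1 @ [z])"
    using Qp(1) Qd path_append[of E "V - {s}" q1 "z # q2"] path_append[of E "V - {s}" "q1 @ [z]" q2] q1ne
    by auto
  have p03: "path_in E V P03"
  proof -
    have "path_in E V Sb" using path_mono[OF pSb(1)] by blast
    moreover have "path_in E V (z # q2)" using path_mono[OF pathQ1(1)] by blast
    then have "path_in E V (rev (z # q2))" using path_rev[of E V "z # q2", OF symE] by blast
    moreover have "hd (rev (z # q2)) = t" using lq2 by (metis hd_rev)
    moreover have "set Sb \<inter> set (rev (z # q2)) = {}" using tSb Qd by auto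
    ultimately show ?thesis unfolding P03_def using path_append[of E V Sb "rev (z # q2)"] pSb(2) Sbne by auto
  qed
  have p12: "path_in E V P12"
  proof -
    have "D \<subseteq> V" using DC C_sub by blast
    then have a: "path_in E V Dp" using path_mono[OF Dp(1)] by blast
    have "y \<notin> set Dp" using DpD DN yN by blast
    then have "path_in E V (Dp @ [y])" using path_append[of E V Dp "[y]"] a Dpne Dp(3) d2 yV by auto
    moreover have "x \<notin> set (Dp @ [y])" using DpD DN xN xy by auto
    moreover have "E x (hd (Dp @ [y]))" using Dp(2) Dpne d1 symE by simp
    ultimately show ?thesis unfolding P12_def using path_append[of E V "[x]" "Dp @ [y]"] xV by auto
  qed
  have p13: "path_in E V R" using path_mono[OF pR] by blast
  have p23: "path_in E V P23" using path_mono[OF pathQ1(2)] unfolding P23_def by blast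
  have p01: "path_in E V [s,x]" using path_Cons2[of E V s x "[]"] sV xV sx NA xN by simp
  have p02: "path_in E V [s,y]" using path_Cons2[of E V s y "[]"] sV yV sy NA yN by simp
  have i03: "set (butlast (tl P03)) \<inter> {s,x,y,z} = {}"
  proof -
    have "butlast (tl P03) = tl Sb @ rev q2" unfolding P03_def using Sbne by (cases Sb) (auto simp: butlast_append)
    moreover have "s \<notin> set (tl Sb)" using pSb(1) hSb Sbne unfolding path_in_alt by (cases Sb) auto
    moreover have "x \<notin> set Sb" "y \<notin> set Sb" using SbC xC yC by blast+
    moreover have "z \<notin> set Sb" using tSb prd(2) by blast
    moreover have "set (tl Sb) \<subseteq> set Sb" by (cases Sb) auto
    ultimately show ?thesis using sq xq yq2 distq by auto
  qed
  have i12: "set (butlast (tl P12)) \<inter> {s,x,y,z} = {}"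
    unfolding P12_def using DpD sDN DN xN yN zD by auto
  have i13: "set (butlast (tl R)) \<inter> {s,x,y,z} = {}"
    unfolding R_def using c3Q c3C a2d(3) xN sC prd(2) Qp(2) unfolding Q_def by (auto simp: butlast_append)
  have i23: "set (butlast (tl P23)) \<inter> {s,x,y,z} = {}"
  proof -
    have "butlast (tl P23) = tl q1" unfolding P23_def using q1ne by (cases q1) auto
    moreover have "y \<notin> set (tl q1)" using hq1 q1ne distq(1) by (cases q1) auto
    moreover have "set (tl q1) \<subseteq> set q1" by (cases q1) auto
    ultimately show ?thesis using sq xq distq by auto
  qed
  have hl: "hd P03 = s" "last P03 = z" "hd P12 = x" "last P12 = y" "hd R = x" "last R = z" "hd P23 = y" "last P23 = z"
    unfolding P03_def P12_def R_def P23_def using hSb Sbne hq1 q1ne by auto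
  have c3D: "set c3 \<inter> D = {}" using a2d(3) by blast
  have core: "set Sb \<inter> set Dp = {}" "set q2 \<inter> set Dp = {}" "set Sb \<inter> set c3 = {}" "set q2 \<inter> set c3 = {}"
    "set Sb \<inter> set q1 = {}" "set q2 \<inter> set q1 = {}" "set Dp \<inter> set c3 = {}" "set Dp \<inter> set q1 = {}" "set c3 \<inter> set q1 = {}"
    using SbC DpD DC q12Q QD c3C c3Q tSb distq(3) c3D by blast+
  have sets: "set P03 \<subseteq> (set Sb \<union> set q2) \<union> {s,x,y,z}" "set P12 \<subseteq> set Dp \<union> {s,x,y,z}"
     "set R \<subseteq> set c3 \<union> {s,x,y,z}" "set P23 \<subseteq> set q1 \<union> {s,x,y,z}"
    unfolding P03_def P12_def R_def P23_def by auto
  have "has_K4_subdivision V E"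
  proof (rule K4I[of bb V E PP K])
    show "inj_on bb {..<4}" by (rule inj)
    show "bb ` {..<4} \<subseteq> V" by (rule BV)
    fix i j assume ij: "i < j" "j < (4::nat)"
    from pairs4[OF ij] show "path_in E V (PP i j) \<and> hd (PP i j) = bb i \<and> last (PP i j) = bb j \<and> set (butlast (tl (PP i j))) \<inter> bb ` {..<4} = {}"
      unfolding Bs using p01 p02 p03 p12 p13 p23 i03 i12 i13 i23 hl
      unfolding PP_def bb_def by auto
    from pairs4[OF ij] show "set (PP i j) \<subseteq> K i j \<union> bb ` {..<4}"
      unfolding Bs using sets unfolding PP_def K_def by auto
  next
    fix i j k l assume ijkl: "i < j" "j < (4::nat)" "k < l" "l < (4::nat)" "(i, j) \<noteq> (k, l)"
    from pairs4[OF ijkl(1,2)] pairs4[OF ijkl(3,4)] ijkl(5) show "K i j \<inter> K k l = {}"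
      unfolding K_def using core by (auto simp: Int_commute Int_Un_distrib Int_Un_distrib2)
  qed
  then show False using nK4 by blast
qed

lemma good:
  assumes wCp: "w \<in> Cp E s t C"
    and x: "x \<in> NN E (DD E s t C w)" "E x s" "\<not> E x t"
    and y: "y \<in> NN E (DD E s t C w)" "E y t" "\<not> E y s"
  shows "critical E s t C"
proof -
  define D where "D = DD E s t C w"
  have DCp: "D \<subseteq> Cp E s t C" unfolding D_def using D_sub by blast
  then have DC: "D \<subseteq> C" unfolding Cp_def by blast
  have xN: "x \<notin> D" "x \<in> C" using x(1) N_C(1)[OF x(1)] unfolding D_def NN_def by blast+
  have yN: "y \<notin> D" "y \<in> C" using y(1) N_C(1)[OF y(1)] unfolding D_def NN_def by blast+
  obtain d1 where d1: "d1 \<in> D" "E d1 x" using x(1) unfolding D_def NN_def by blast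
  obtain d2 where d2: "d2 \<in> D" "E d2 y" using y(1) unfolding D_def NN_def by blast
  obtain Dp where Dp: "path_in E D Dp" "hd Dp = d1" "last Dp = d2" using D_path d1(1) d2(1) unfolding D_def by blast
  have DpD: "set Dp \<subseteq> D" using Dp(1) unfolding path_in_alt by blast
  have Dpne: "Dp \<noteq> []" using Dp(1) unfolding path_in_alt by blast
  define S where "S = C \<union> {s,t}"
  have xy: "x \<noteq> y" using x(3) y(2) by blast
  have p1: "path_in E S [s,x]" using path_Cons2[of E S s x "[]"] xN sC x(2) symE unfolding S_def by auto
  have p3: "path_in E S [y,t]" using path_Cons2[of E S y t "[]"] yN tC y(2) unfolding S_def by auto
  have "D \<subseteq> S" using DC unfolding S_def by blast
  then have p2: "path_in E S Dp" using path_mono[OF Dp(1)] by blast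
  have "set Dp \<inter> set [y,t] = {}" using DpD yN tC DC by auto
  then have p23: "path_in E S (Dp @ [y,t])" using path_append[of E S Dp "[y,t]"] p2 p3 Dpne Dp(3) d2 by auto
  have "set [s,x] \<inter> set (Dp @ [y,t]) = {}" using DpD xN yN sC tC DC xy st by auto
  moreover have "E x (hd (Dp @ [y,t]))" using Dp(2) Dpne d1 symE by simp
  ultimately have pall: "path_in E S ([s,x] @ Dp @ [y,t])" using path_append[of E S "[s,x]" "Dp @ [y,t]"] p1 p23 by auto
  have eq: "[s,x] @ Dp @ [y,t] = s # [x] @ d1 # (tl Dp @ [y]) @ [t]" using Dpne Dp(2) by (cases Dp) auto
  have d1Cp: "d1 \<in> Cp E s t C" using d1 DCp by blast
  have tlD: "set (tl Dp) \<subseteq> Cp E s t C" using DpD DCp Dpne by (cases Dp) auto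
  have c1: "\<not> E d1 s" "\<not> E d1 t" "d1 \<in> C" using d1Cp unfolding Cp_def by auto
  have pall2: "path_in E S (s # [x] @ d1 # (tl Dp @ [y]) @ [t])" using pall unfolding eq .
  then have c2: "path_in E (C \<union> {s, t}) (s # [x] @ d1 # (tl Dp @ [y]) @ [t])" by (simp only: S_def)
  have c3: "\<forall>u\<in>set [x]. \<not> E u t" using x(3) by simp
  have c4: "\<forall>u\<in>set (tl Dp @ [y]). \<not> E u s" using tlD y(3) unfolding Cp_def by auto
  show ?thesis unfolding critical_def using c1 c2 c3 c4 by blast
qed

lemma comp_swap: "component V E t s C"
proof -
  have "{t,s} = {s,t}" by blast
  then show ?thesis using comp unfolding component_def sep_pair_def by auto
qed

lemma heavy_crit:
  assumes h: "heavy E s t C" and nK4: "\<not> has_K4_subdivision V E"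
  shows "critical E s t C"
proof -
  obtain w where w: "w \<in> C" "\<not> E w s" "\<not> E w t" using h unfolding heavy_def by blast
  then have wCp: "w \<in> Cp E s t C" unfolding Cp_def by blast
  define N where "N = NN E (DD E s t C w)"
  have Nst: "\<And>u. u \<in> N \<Longrightarrow> E u s \<or> E u t" unfolding N_def using N_C(2) by blast
  show ?thesis
  proof (cases "(\<exists>x\<in>N. E x s \<and> \<not> E x t) \<and> (\<exists>y\<in>N. E y t \<and> \<not> E y s)")
    case True
    then obtain x y where "x \<in> N" "E x s" "\<not> E x t" "y \<in> N" "E y t" "\<not> E y s" by blast
    then show ?thesis using good[OF wCp] unfolding N_def by blast
  next
    case False
    show ?thesis
    proof (cases "\<forall>x\<in>N. E x s")
      case True
      then have "\<forall>x \<in> NN E (DD E s t C w). E x s" unfolding N_def .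
      then have False using bad[OF wCp _ nK4] by blast
      then show ?thesis ..
    next
      case F2: False
      then have allt: "\<forall>x\<in>N. E x t" using False Nst by blast
      interpret sw: SPC V E t s C using bic ntr comp_swap by unfold_locales
      have a: "w \<in> Cp E t s C" using wCp unfolding Cp_def by blast
      have b: "\<forall>x \<in> NN E (DD E t s C w). E x t" using allt unfolding N_def by (subst DD_swap)
      have False using sw.bad[OF a b nK4] .
      then show ?thesis ..
    qed
  qed
qed

end

theorem lemma2:
  fixes V :: "'a set" and E :: "'a \<Rightarrow> 'a \<Rightarrow> bool" and s t :: 'a and C :: "'a set"
  assumes "biconnected V E"
    and "series_parallel V E"
    and "no_transitive_edges V E"
    and "component V E s t C"
  shows "critical E s t C \<longleftrightarrow> heavy E s t C"
proof
  assume "critical E s t C"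
  then show "heavy E s t C" unfolding critical_def heavy_def by blast
next
  assume h: "heavy E s t C"
  interpret SPC V E s t C using assms(1,3,4) by unfold_locales
  have "\<not> has_K4_subdivision V E" using assms(2) unfolding series_parallel_def by blast
  then show "critical E s t C" using heavy_crit h by blast
qed

end
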